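(* Let $C=L_1;\ldots;L_D$ be a sorting network on $n$ channels containing no redundant comparators, and suppose that $C$ contains a comparator $(i,j)$ in layer $L_d$ with $j>i+1$. Then at least one of the channels $i$ and $j$ is used in some layer $L_{d'}$ with $d'>d$.
   Context: Channels are numbered $1,\ldots,n$. A comparator network is a sequence $C=L_1;\ldots;L_D$ of layers; each layer is a set of comparators $(i,j)$ with $1\le i<j\le n$, each channel occurring in at most one comparator of a layer. An input $\bar x\in\{0,1\}^n$ propagates: $\bar x_0=\bar x$, and $\bar x_k$ is obtained from $\bar x_{k-1}$ by, for each $(i,j)\in L_k$, putting the minimum of the values at positions $i,j$ at position $i$ and the maximum at position $j$. The output is $C(\bar x)=\bar x_D$; $C$ is a sorting network if $C(\bar x)$ is sorted non-decreasingly for all $\bar x\in\{0,1\}^n$. A comparator $(i,j)\in L_\ell$ is redundant if for every input $\bar x$ we have $(\bar x_{\ell-1})_i\le(\bar x_{\ell-1})_j$. A channel is used in layer $L_\ell$ if it occurs in some comparator of $L_\ell$. *)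

theory Defs
  imports Main
begin

type_synonym comparator = "nat \<times> nat"
type_synonym layer = "comparator set"
type_synonym network = "layer list"

definition layer_of :: "network \<Rightarrow> nat \<Rightarrow> layer" where
  "layer_of C l = C ! (l - 1)"

definition wf_layer :: "nat \<Rightarrow> layer \<Rightarrow> bool" where
  "wf_layer n L \<longleftrightarrow>
     (\<forall>(i,j)\<in>L. 1 \<le> i \<and> i < j \<and> j \<le> n) \<and>
     (\<forall>c\<in>L. \<forall>c'\<in>L. c \<noteq> c' \<longrightarrow>
        {fst c, snd c} \<inter> {fst c', snd c'} = {})"

definition wf_network :: "nat \<Rightarrow> network \<Rightarrow> bool" where
  "wf_network n C \<longleftrightarrow> (\<forall>L\<in>set C. wf_layer n L)"

definition apply_layer :: "layer \<Rightarrow> (nat \<Rightarrow> nat) \<Rightarrow> (nat \<Rightarrow> nat)" where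
  "apply_layer L x = (\<lambda>k.
     if \<exists>j. (k,j) \<in> L then min (x k) (x (THE j. (k,j) \<in> L))
     else if \<exists>i. (i,k) \<in> L then max (x (THE i. (i,k) \<in> L)) (x k)
     else x k)"

definition run :: "network \<Rightarrow> nat \<Rightarrow> (nat \<Rightarrow> nat) \<Rightarrow> (nat \<Rightarrow> nat)" where
  "run C k x = foldl (\<lambda>y L. apply_layer L y) x (take k C)"

definition net_output :: "network \<Rightarrow> (nat \<Rightarrow> nat) \<Rightarrow> (nat \<Rightarrow> nat)" where
  "net_output C x = run C (length C) x"

(* 0/1 inputs on channels 1..n (values on other positions are irrelevant) *)
definition binary_input :: "nat \<Rightarrow> (nat \<Rightarrow> nat) \<Rightarrow> bool" where
  "binary_input n x \<longleftrightarrow> (\<forall>k\<in>{1..n}. x k \<in> {0,1})"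

definition sorted_on :: "nat \<Rightarrow> (nat \<Rightarrow> nat) \<Rightarrow> bool" where
  "sorted_on n y \<longleftrightarrow> (\<forall>a b. 1 \<le> a \<and> a \<le> b \<and> b \<le> n \<longrightarrow> y a \<le> y b)"

definition sorting_network :: "nat \<Rightarrow> network \<Rightarrow> bool" where
  "sorting_network n C \<longleftrightarrow> wf_network n C \<and>
     (\<forall>x. binary_input n x \<longrightarrow> sorted_on n (net_output C x))"

definition redundant :: "nat \<Rightarrow> network \<Rightarrow> nat \<Rightarrow> comparator \<Rightarrow> bool" where
  "redundant n C l c \<longleftrightarrow>
     (\<forall>x. binary_input n x \<longrightarrow> run C (l - 1) x (fst c) \<le> run C (l - 1) x (snd c))"

definition no_redundant :: "nat \<Rightarrow> network \<Rightarrow> bool" where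
  "no_redundant n C \<longleftrightarrow>
     (\<forall>l\<in>{1..length C}. \<forall>c\<in>layer_of C l. \<not> redundant n C l c)"

definition used_in :: "nat \<Rightarrow> layer \<Rightarrow> bool" where
  "used_in k L \<longleftrightarrow> (\<exists>c\<in>L. k = fst c \<or> k = snd c)"

end

theory Submission
  imports Defs
begin


lemma wl_bounds: "wf_layer n L \<Longrightarrow> (a,b) \<in> L \<Longrightarrow> 1 \<le> a \<and> a < b \<and> b \<le> n"
  unfolding wf_layer_def by fast

lemma wl_disj: "wf_layer n L \<Longrightarrow> c \<in> L \<Longrightarrow> c' \<in> L \<Longrightarrow> c \<noteq> c' \<Longrightarrow> {fst c, snd c} \<inter> {fst c', snd c'} = {}"
  unfolding wf_layer_def by blast

lemma apply_fst:
  assumes wf: "wf_layer n L" and ab: "(a,b) \<in> L"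
  shows "apply_layer L y a = min (y a) (y b)"
proof -
  have u: "(THE j. (a,j) \<in> L) = b"
  proof (rule the_equality)
    show "(a,b) \<in> L" by fact
    fix j assume "(a,j) \<in> L"
    show "j = b"
    proof (rule ccontr)
      assume "j \<noteq> b"
      then have "(a,j) \<noteq> (a,b)" by simp
      from wl_disj[OF wf \<open>(a,j) \<in> L\<close> ab this] show False by simp
    qed
  qed
  show ?thesis using ab u unfolding apply_layer_def by auto
qed

lemma apply_snd:
  assumes wf: "wf_layer n L" and ab: "(a,b) \<in> L"
  shows "apply_layer L y b = max (y a) (y b)"
proof -
  have ne: "\<not> (\<exists>j. (b,j) \<in> L)"
  proof
    assume "\<exists>j. (b,j) \<in> L"
    then obtain j where bj: "(b,j) \<in> L" by blast
    have "a < b" using wl_bounds[OF wf ab] by simp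
    then have "(b,j) \<noteq> (a,b)" by auto
    from wl_disj[OF wf bj ab this] show False by simp
  qed
  have u: "(THE i. (i,b) \<in> L) = a"
  proof (rule the_equality)
    show "(a,b) \<in> L" by fact
    fix i assume ib: "(i,b) \<in> L"
    show "i = a"
    proof (rule ccontr)
      assume "i \<noteq> a"
      then have "(i,b) \<noteq> (a,b)" by simp
      from wl_disj[OF wf ib ab this] show False by simp
    qed
  qed
  show ?thesis using ab u ne unfolding apply_layer_def by auto
qed

lemma used_in_iff: "used_in k L \<longleftrightarrow> (\<exists>b. (k,b) \<in> L) \<or> (\<exists>a. (a,k) \<in> L)"
  unfolding used_in_def by force

lemma apply_none: "\<not> used_in k L \<Longrightarrow> apply_layer L y k = y k"
  unfolding apply_layer_def used_in_iff by auto

lemma apply_mono: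
  assumes h: "\<And>k. x k \<le> x' k"
  shows "apply_layer L x k \<le> apply_layer L x' k"
proof -
  have m1: "min (x a) (x b) \<le> min (x' a) (x' b)" for a b by (rule min.mono[OF h h])
  have m2: "max (x a) (x b) \<le> max (x' a) (x' b)" for a b by (rule max.mono[OF h h])
  show ?thesis unfolding apply_layer_def
    by (cases "\<exists>j. (k, j) \<in> L"; cases "\<exists>i. (i, k) \<in> L") (simp_all only: if_True if_False m1 m2 h)
qed

lemma run_0: "run C 0 x = x" unfolding run_def by simp

lemma run_Suc: "l < length C \<Longrightarrow> run C (Suc l) x = apply_layer (C!l) (run C l x)"
  unfolding run_def by (simp add: take_Suc_conv_app_nth)

lemma run_ge: "length C \<le> l \<Longrightarrow> run C l x = run C (length C) x"
  unfolding run_def by simp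

lemma run_mono: "(\<And>k. x k \<le> x' k) \<Longrightarrow> run C l x k \<le> run C l x' k"
proof (induction l arbitrary: k)
  case 0 then show ?case by (simp add: run_0)
next
  case (Suc l)
  show ?case
  proof (cases "l < length C")
    case True then show ?thesis using Suc by (simp add: run_Suc apply_mono)
  next
    case False
    then have "run C (Suc l) x = run C l x" "run C (Suc l) x' = run C l x'"
      using run_ge[of C l] run_ge[of C "Suc l"] by auto
    then show ?thesis using Suc by simp
  qed
qed

lemma apply_sorted:
  assumes wf: "wf_layer n L" and s: "sorted_on n x"
  shows "apply_layer L x = x"
proof
  fix k show "apply_layer L x k = x k"
  proof (cases "used_in k L")
    case False then show ?thesis by (rule apply_none)
  next
    case True
    then consider b where "(k,b) \<in> L" | a where "(a,k) \<in> L" unfolding used_in_iff by blast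
    then show ?thesis
    proof cases
      case 1
      with wl_bounds[OF wf this] s have "x k \<le> x b" unfolding sorted_on_def by simp
      then show ?thesis using apply_fst[OF wf 1] by simp
    next
      case 2
      with wl_bounds[OF wf this] s have "x a \<le> x k" unfolding sorted_on_def by simp
      then show ?thesis using apply_snd[OF wf 2] by simp
    qed
  qed
qed

lemma run_sorted:
  assumes wf: "wf_network n C" and s: "sorted_on n x"
  shows "run C l x = x"
proof (induction l)
  case 0 then show ?case by (simp add: run_0)
next
  case (Suc l)
  show ?case
  proof (cases "l < length C")
    case True
    then have "wf_layer n (C!l)" using wf unfolding wf_network_def by simp
    then show ?thesis using True Suc apply_sorted[OF _ s] by (simp add: run_Suc)
  next
    case False
    then show ?thesis using Suc run_ge[of C l] run_ge[of C "Suc l"] by auto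
  qed
qed

lemma apply_binary:
  assumes wf: "wf_layer n L" and b: "binary_input n x"
  shows "binary_input n (apply_layer L x)"
  unfolding binary_input_def
proof
  fix k assume k: "k \<in> {1..n}"
  show "apply_layer L x k \<in> {0,1}"
  proof (cases "used_in k L")
    case False then show ?thesis using apply_none[OF False] b k unfolding binary_input_def by simp
  next
    case True
    then consider c where "(k,c) \<in> L" | a where "(a,k) \<in> L" unfolding used_in_iff by blast
    then show ?thesis
    proof cases
      case 1
      with wl_bounds[OF wf this] b k have "x k \<in> {0,1}" "x c \<in> {0,1}" unfolding binary_input_def by auto
      then show ?thesis using apply_fst[OF wf 1] by auto
    next
      case 2
      with wl_bounds[OF wf this] b k have "x k \<in> {0,1}" "x a \<in> {0,1}" unfolding binary_input_def by auto
      then show ?thesis using apply_snd[OF wf 2] by auto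
    qed
  qed
qed

lemma run_binary:
  assumes wf: "wf_network n C" and b: "binary_input n x"
  shows "binary_input n (run C l x)"
proof (induction l)
  case 0 then show ?case using b by (simp add: run_0)
next
  case (Suc l)
  show ?case
  proof (cases "l < length C")
    case True
    then have "wf_layer n (C!l)" using wf unfolding wf_network_def by simp
    then show ?thesis using True Suc apply_binary by (simp add: run_Suc)
  next
    case False
    then show ?thesis using Suc run_ge[of C l] run_ge[of C "Suc l"] by auto
  qed
qed



lemma layer_sum:
  assumes wf: "wf_layer n L"
  shows "(\<Sum>k\<in>{1..n}. apply_layer L y k) = (\<Sum>k\<in>{1..n}. y k)"
proof -
  have Lsub: "L \<subseteq> {1..n} \<times> {1..n}" using wl_bounds[OF wf] by fastforce
  have finL: "finite L" using finite_subset[OF Lsub] by simp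
  define A where "A = fst ` L"
  define B where "B = snd ` L"
  define R where "R = {1..n} - A - B"
  have AB: "A \<inter> B = {}"
  proof (rule ccontr)
    assume "A \<inter> B \<noteq> {}"
    then obtain k b a where kb: "(k,b) \<in> L" and ak: "(a,k) \<in> L" unfolding A_def B_def by force
    have "a < k" using wl_bounds[OF wf ak] by simp
    then have "(k,b) \<noteq> (a,k)" by auto
    from wl_disj[OF wf kb ak this] show False by simp
  qed
  have injA: "inj_on fst L"
  proof (rule inj_onI)
    fix c c' assume c: "c \<in> L" "c' \<in> L" "fst c = fst c'"
    show "c = c'" using wl_disj[OF wf c(1) c(2)] c(3) by blast
  qed
  have injB: "inj_on snd L"
  proof (rule inj_onI)
    fix c c' assume c: "c \<in> L" "c' \<in> L" "snd c = snd c'"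
    show "c = c'" using wl_disj[OF wf c(1) c(2)] c(3) by blast
  qed
  have ABsub: "A \<subseteq> {1..n}" "B \<subseteq> {1..n}" using Lsub unfolding A_def B_def by auto
  have gen: "sum h {1..n} = (\<Sum>c\<in>L. h (fst c) + h (snd c)) + sum h R" for h :: "nat \<Rightarrow> nat"
  proof -
    have eq: "{1..n} = (A \<union> B) \<union> R" using ABsub unfolding R_def by auto
    have "sum h {1..n} = sum h (A \<union> B) + sum h R"
      unfolding eq by (rule sum.union_disjoint) (auto simp: R_def A_def B_def finL)
    also have "sum h (A \<union> B) = sum h A + sum h B"
      by (rule sum.union_disjoint) (auto simp: A_def B_def finL AB[unfolded A_def B_def])
    also have "sum h A = (\<Sum>c\<in>L. h (fst c))" unfolding A_def using sum.reindex[OF injA] by simp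
    also have "sum h B = (\<Sum>c\<in>L. h (snd c))" unfolding B_def using sum.reindex[OF injB] by simp
    finally show ?thesis by (simp add: sum.distrib)
  qed
  have pairs: "(\<Sum>c\<in>L. apply_layer L y (fst c) + apply_layer L y (snd c)) = (\<Sum>c\<in>L. y (fst c) + y (snd c))"
  proof (rule sum.cong)
    fix c assume c: "c \<in> L"
    obtain a b where ab: "c = (a,b)" by fastforce
    show "apply_layer L y (fst c) + apply_layer L y (snd c) = y (fst c) + y (snd c)"
      using apply_fst[OF wf c[unfolded ab]] apply_snd[OF wf c[unfolded ab]] ab by simp
  qed simp
  have rest: "sum (apply_layer L y) R = sum y R"
  proof (rule sum.cong)
    fix k assume "k \<in> R"
    then have "\<not> used_in k L" unfolding R_def A_def B_def used_in_def by force
    then show "apply_layer L y k = y k" by (rule apply_none)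
  qed simp
  show ?thesis using gen[of "apply_layer L y"] gen[of y] pairs rest by simp
qed

lemma run_sum:
  assumes wf: "wf_network n C"
  shows "(\<Sum>k\<in>{1..n}. run C l x k) = (\<Sum>k\<in>{1..n}. x k)"
proof (induction l)
  case 0 then show ?case by (simp add: run_0)
next
  case (Suc l)
  show ?case
  proof (cases "l < length C")
    case True
    then have "wf_layer n (C!l)" using wf unfolding wf_network_def by simp
    then show ?thesis using True Suc layer_sum by (simp add: run_Suc)
  next
    case False
    then show ?thesis using Suc run_ge[of C l] run_ge[of C "Suc l"] by auto
  qed
qed

lemma sum_ind: "(\<Sum>k=1..n. if k \<le> j then 0 else 1::nat) = n - j"
  by (induction n) (auto)

lemma sorted_one:
  assumes s: "sorted_on n y" and b: "binary_input n y" and k: "1 \<le> k" "k \<le> n" and y: "y k = 1"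
  shows "n - (k - 1) \<le> (\<Sum>m\<in>{1..n}. y m)"
proof -
  have "(\<Sum>m=1..n. if m \<le> k - 1 then 0 else 1::nat) \<le> (\<Sum>m\<in>{1..n}. y m)"
  proof (rule sum_mono)
    fix m assume m: "m \<in> {1..n}"
    show "(if m \<le> k - 1 then 0 else 1) \<le> y m"
    proof (cases "m \<le> k - 1")
      case False then have "k \<le> m" by simp
      then have "y k \<le> y m" using s k m unfolding sorted_on_def by auto
      then show ?thesis using False y by simp
    qed simp
  qed
  then show ?thesis by (simp only: sum_ind)
qed

lemma sorted_zero:
  assumes s: "sorted_on n y" and b: "binary_input n y" and k: "1 \<le> k" "k \<le> n" and y: "y k = 0"
  shows "(\<Sum>m\<in>{1..n}. y m) \<le> n - k"
proof -
  have "(\<Sum>m\<in>{1..n}. y m) \<le> (\<Sum>m=1..n. if m \<le> k then 0 else 1::nat)"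
  proof (rule sum_mono)
    fix m assume m: "m \<in> {1..n}"
    show "y m \<le> (if m \<le> k then 0 else 1)"
    proof (cases "m \<le> k")
      case True
      then have "y m \<le> y k" using s k m unfolding sorted_on_def by auto
      then show ?thesis using True y by simp
    next
      case False
      have "y m \<in> {0,1}" using b m unfolding binary_input_def by blast
      then show ?thesis using False by auto
    qed
  qed
  then show ?thesis by (simp only: sum_ind)
qed

lemma sum_upd:
  assumes "finite A" "q \<in> A"
  shows "sum (f(q:=v)) A + f q = sum f A + (v::nat)"
proof -
  have "sum (f(q:=v)) A = v + sum (f(q:=v)) (A - {q})" using sum.remove[OF assms, of "f(q:=v)"] by simp
  also have "sum (f(q:=v)) (A - {q}) = sum f (A - {q})" by (rule sum.cong) auto
  finally show ?thesis using sum.remove[OF assms, of f] by simp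
qed



theorem corollary1:
  fixes n :: nat and C :: network and d i j :: nat
  assumes "sorting_network n C"
    and "no_redundant n C"
    and "1 \<le> d" and "d \<le> length C"
    and "(i, j) \<in> layer_of C d"
    and "j > i + 1"
  shows "\<exists>d'. d < d' \<and> d' \<le> length C \<and>
           (used_in i (layer_of C d') \<or> used_in j (layer_of C d'))"
proof (rule ccontr)
  assume H: "\<not> ?thesis"
  have wfN: "wf_network n C" using assms(1) unfolding sorting_network_def by simp
  have sortC: "binary_input n x \<Longrightarrow> sorted_on n (net_output C x)" for x
    using assms(1) unfolding sorting_network_def by simp
  define L where "L = layer_of C d"
  have Lin: "L = C ! (d-1)" "d - 1 < length C" using assms(3,4) unfolding L_def layer_of_def by auto
  have wfL: "wf_layer n L" using wfN Lin unfolding wf_network_def by simp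
  have ij: "(i,j) \<in> L" using assms(5) L_def by simp
  have bnd: "1 \<le> i" "i < j" "j \<le> n" using wl_bounds[OF wfL ij] by auto
  have rund: "run C d x = apply_layer L (run C (d-1) x)" for x
    using run_Suc[OF Lin(2), of x] Lin(1) assms(3) by simp
  have keep: "run C l x k = run C d x k" if "k = i \<or> k = j" "d \<le> l" "l \<le> length C" for l x k
    using that(2,3)
  proof (induction l)
    case 0 then show ?case by simp
  next
    case (Suc l)
    show ?case
    proof (cases "d = Suc l")
      case True then show ?thesis by simp
    next
      case False
      then have dl: "d \<le> l" "l < length C" using Suc.prems by auto
      have "layer_of C (Suc l) = C ! l" unfolding layer_of_def by simp
      moreover have "d < Suc l" "Suc l \<le> length C" using dl by auto
      ultimately have "\<not> used_in k (C ! l)" using H that(1) by auto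
      then have "run C (Suc l) x k = run C l x k" using run_Suc[OF dl(2)] apply_none by simp
      then show ?thesis using Suc.IH dl by simp
    qed
  qed
  define F where "F x = run C (d-1) x i" for x
  define G where "G x = run C (d-1) x j" for x
  have outi: "net_output C x i = min (F x) (G x)" for x
    using keep[where k=i and l="length C" and x=x] assms(4) rund apply_fst[OF wfL ij] unfolding net_output_def F_def G_def by simp
  have outj: "net_output C x j = max (F x) (G x)" for x
    using keep[where k=j and l="length C" and x=x] assms(4) rund apply_snd[OF wfL ij] unfolding net_output_def F_def G_def by simp
  define S where "S x = (\<Sum>k\<in>{1..n}. x k)" for x :: "nat \<Rightarrow> nat"
  have Sout: "S (net_output C x) = S x" for x unfolding S_def net_output_def using run_sum[OF wfN] by simp
  have Fb: "binary_input n x \<Longrightarrow> F x \<in> {0,1} \<and> G x \<in> {0,1}" for x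
    using run_binary[OF wfN] bnd unfolding F_def G_def binary_input_def by simp
  have outb: "binary_input n x \<Longrightarrow> binary_input n (net_output C x)" for x
    using run_binary[OF wfN] unfolding net_output_def by simp
  have mid: "F x = 1 \<longleftrightarrow> G x = 0"
    if b: "binary_input n x" and s1: "n - j + 1 \<le> S x" and s2: "S x \<le> n - i" for x
  proof -
    have o1: "net_output C x i = 0"
    proof (rule ccontr)
      assume "net_output C x i \<noteq> 0"
      moreover have "i \<in> {1..n}" using bnd by simp
      ultimately have "net_output C x i = 1" using outb[OF b] unfolding binary_input_def by fastforce
      from sorted_one[OF sortC[OF b] outb[OF b] bnd(1) _ this] bnd have "n - (i - 1) \<le> S x"
        using Sout[of x] unfolding S_def by simp
      then show False using s2 bnd by simp
    qed
    have o2: "net_output C x j = 1"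
    proof (rule ccontr)
      assume "net_output C x j \<noteq> 1"
      moreover have "j \<in> {1..n}" using bnd by simp
      ultimately have "net_output C x j = 0" using outb[OF b] unfolding binary_input_def by fastforce
      from sorted_zero[OF sortC[OF b] outb[OF b] _ bnd(3) this] bnd have "S x \<le> n - j"
        using Sout[of x] unfolding S_def by simp
      then show False using s1 bnd by simp
    qed
    show ?thesis using o1 o2 outi[of x] outj[of x] Fb[OF b] by auto
  qed
  define P where "P x \<longleftrightarrow> binary_input n x \<and> n - j + 1 \<le> S x \<and> S x \<le> n - i \<and> F x = 1" for x
  obtain x0 where P0: "P x0"
  proof -
    have "\<not> redundant n C d (i,j)" using assms(2) assms(3,4) ij L_def unfolding no_redundant_def by auto
    then obtain x where b: "binary_input n x" and lt: "run C (d-1) x i > run C (d-1) x j"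
      unfolding redundant_def by auto
    have FG: "F x = 1" "G x = 0" using lt Fb[OF b] unfolding F_def G_def by auto
    have o1: "net_output C x i = 0" "net_output C x j = 1" using outi outj FG by auto
    have "S x \<le> n - i"
      using sorted_zero[OF sortC[OF b] outb[OF b] bnd(1) _ o1(1)] bnd Sout[of x] unfolding S_def by simp
    moreover have "n - (j - 1) \<le> S x"
      using sorted_one[OF sortC[OF b] outb[OF b] _ bnd(3) o1(2)] bnd Sout[of x] unfolding S_def by simp
    ultimately have "P x" unfolding P_def using b FG bnd by auto
    then show ?thesis using that by blast
  qed
  have binupd: "binary_input n (x(q:=v))" if "binary_input n x" "v \<in> {0,1}" for x q v
    using that unfolding binary_input_def by auto
  have Fmono: "F x \<le> F x'" "G x \<le> G x'" if "\<And>k. x k \<le> x' k" for x x'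
    unfolding F_def G_def using run_mono[OF that] by auto
  have PG: "P x \<Longrightarrow> G x = 0" for x using mid unfolding P_def by auto
  have Supd1: "S (x(q:=1)) = S x + 1" if "q \<in> {1..n}" "x q = 0" for x q
    using sum_upd[of "{1..n}" q x 1] that unfolding S_def by simp
  have Supd0: "S (x(q:=0)) + 1 = S x" if "q \<in> {1..n}" "x q = 1" for x q
    using sum_upd[of "{1..n}" q x 0] that unfolding S_def by simp
  have swap: "P (x(p:=0, q:=1))"
    if Px: "P x" and pq: "p \<in> {1..n}" "q \<in> {1..n}" and xp: "x p = 1" and xq: "x q = 0" for x p q
  proof -
    have b: "binary_input n x" and s1: "n - j + 1 \<le> S x" and s2: "S x \<le> n - i" and F1: "F x = 1"
      using Px unfolding P_def by auto
    have G0: "G x = 0" using PG[OF Px] .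
    have pnq: "p \<noteq> q" using xp xq by auto
    have tw: "x(p:=0, q:=1) = x(q:=1, p:=0)" using pnq by (rule fun_upd_twist)
    show ?thesis
    proof (cases "S x + 1 \<le> n - i")
      case True
      define x1 where "x1 = x(q:=1)"
      have b1: "binary_input n x1" unfolding x1_def using binupd[OF b] by simp
      have S1: "S x1 = S x + 1" unfolding x1_def using Supd1[where x=x and q=q, OF pq(2) xq] .
      have "F x \<le> F x1" by (rule Fmono) (auto simp: x1_def xq)
      then have F11: "F x1 = 1" using Fb[OF b1] F1 by auto
      have G10: "G x1 = 0" using mid[OF b1] S1 s1 True F11 by auto
      define x2 where "x2 = x1(p:=0)"
      have b2: "binary_input n x2" unfolding x2_def using binupd[OF b1] by simp
      have x1p: "x1 p = 1" unfolding x1_def using xp pnq by simp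
      have S2: "S x2 = S x" using Supd0[where x=x1 and q=p, OF pq(1) x1p] S1 unfolding x2_def by simp
      have "G x2 \<le> G x1" by (rule Fmono) (auto simp: x2_def)
      then have "G x2 = 0" using G10 by simp
      then have "F x2 = 1" using mid[OF b2] S2 s1 s2 by auto
      then have "P x2" unfolding P_def using b2 S2 s1 s2 by auto
      then show ?thesis using tw unfolding x2_def x1_def by simp
    next
      case False
      then have s3: "n - j + 2 \<le> S x" using bnd assms(6) s2 by linarith
      define x1 where "x1 = x(p:=0)"
      have b1: "binary_input n x1" unfolding x1_def using binupd[OF b] by simp
      have S1: "S x1 + 1 = S x" unfolding x1_def using Supd0[where x=x and q=p, OF pq(1) xp] .
      have "G x1 \<le> G x" by (rule Fmono) (auto simp: x1_def xp)
      then have G10: "G x1 = 0" using G0 by simp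
      have F11: "F x1 = 1" using mid[OF b1] S1 s3 s2 G10 by auto
      define x2 where "x2 = x1(q:=1)"
      have b2: "binary_input n x2" unfolding x2_def using binupd[OF b1] by simp
      have x1q: "x1 q = 0" unfolding x1_def using xq pnq by simp
      have S2: "S x2 = S x" using Supd1[where x=x1 and q=q, OF pq(2) x1q] S1 unfolding x2_def by simp
      have "F x1 \<le> F x2" by (rule Fmono) (auto simp: x2_def x1q)
      then have "F x2 = 1" using F11 Fb[OF b2] by auto
      then have "P x2" unfolding P_def using b2 S2 s1 s2 by auto
      then show ?thesis unfolding x2_def x1_def by simp
    qed
  qed
  define s where "s = S x0"
  have b0: "binary_input n x0" using P0 unfolding P_def by simp
  have sn: "s \<le> n"
  proof -
    have "s \<le> (\<Sum>k\<in>{1..n}. 1)" unfolding s_def S_def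
    proof (rule sum_mono)
      fix k assume "k \<in> {1..n}"
      then have "x0 k \<in> {0,1}" using b0 unfolding binary_input_def by blast
      then show "x0 k \<le> 1" by auto
    qed
    then show ?thesis by simp
  qed
  define z where "z k = (if k \<in> {1..n} then (if n - s < k then 1 else 0) else x0 k)" for k
  have zb: "binary_input n z" unfolding binary_input_def z_def by auto
  have zs: "sorted_on n z" unfolding sorted_on_def z_def by auto
  have Sz: "S z = s"
  proof -
    have "S z = (\<Sum>k=1..n. if k \<le> n - s then 0 else 1::nat)"
      unfolding S_def by (rule sum.cong) (auto simp: z_def)
    also have "\<dots> = n - (n - s)" by (rule sum_ind)
    finally show ?thesis using sn by simp
  qed
  have eqsum: "x k = y k"
    if "binary_input n x" "binary_input n y" "S x = S y" "\<forall>k\<in>{1..n}. \<not> (x k = 1 \<and> y k = 0)" "k \<in> {1..n}"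
    for x y k
  proof -
    have "x k \<le> y k" if "k \<in> {1..n}" for k
    proof -
      have "x k \<in> {0,1}" "y k \<in> {0,1}" using that \<open>binary_input n x\<close> \<open>binary_input n y\<close>
        unfolding binary_input_def by auto
      then show ?thesis using \<open>\<forall>k\<in>{1..n}. \<not> (x k = 1 \<and> y k = 0)\<close> that by auto
    qed
    then show ?thesis using sum_mono_inv[of x "{1..n}" y k] that(3,5) unfolding S_def by auto
  qed
  have reach: "\<forall>x. P x \<longrightarrow> S x = s \<longrightarrow> (\<forall>k. k \<notin> {1..n} \<longrightarrow> x k = x0 k) \<longrightarrow>
      card {k\<in>{1..n}. x k = 1 \<and> z k = 0} = m \<longrightarrow> P z" for m
  proof (induction m)
    case 0
    show ?case
    proof (intro allI impI)
      fix x assume Px: "P x" and Sx: "S x = s" and out: "\<forall>k. k \<notin> {1..n} \<longrightarrow> x k = x0 k"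
        and c: "card {k\<in>{1..n}. x k = 1 \<and> z k = 0} = 0"
      have bx: "binary_input n x" using Px unfolding P_def by simp
      have "{k\<in>{1..n}. x k = 1 \<and> z k = 0} = {}" using c by simp
      then have "\<forall>k\<in>{1..n}. \<not> (x k = 1 \<and> z k = 0)" by blast
      moreover have "S x = S z" using Sx Sz by simp
      ultimately have "x k = z k" if "k \<in> {1..n}" for k using eqsum[OF bx zb] that by blast
      moreover have "x k = z k" if "k \<notin> {1..n}" for k
      proof -
        have "z k = x0 k" unfolding z_def by (rule if_not_P[OF that])
        then show ?thesis using out that by simp
      qed
      ultimately have "x = z" by blast
      then show "P z" using Px by simp
    qed
  next
    case (Suc m)
    show ?case
    proof (intro allI impI)
      fix x assume Px: "P x" and Sx: "S x = s" and out: "\<forall>k. k \<notin> {1..n} \<longrightarrow> x k = x0 k"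
        and c: "card {k\<in>{1..n}. x k = 1 \<and> z k = 0} = Suc m"
      have bx: "binary_input n x" using Px unfolding P_def by simp
      have "{k\<in>{1..n}. x k = 1 \<and> z k = 0} \<noteq> {}" using c by (metis card.empty nat.distinct(1))
      then obtain p where p: "p \<in> {1..n}" "x p = 1" "z p = 0" by blast
      obtain q where q: "q \<in> {1..n}" "x q = 0" "z q = 1"
      proof (rule ccontr)
        assume "\<not> thesis"
        then have "\<forall>k\<in>{1..n}. \<not> (z k = 1 \<and> x k = 0)" using that by blast
        moreover have "S z = S x" using Sx Sz by simp
        ultimately have "z p = x p" using eqsum[OF zb bx] p(1) by blast
        then show False using p by simp
      qed
      define x' where "x' = x(p:=0, q:=1)"
      have Px': "P x'" unfolding x'_def using swap[OF Px p(1) q(1) p(2) q(2)] .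
      have pnq: "p \<noteq> q" using p q by auto
      have "S (x(p:=0)) + 1 = S x" using Supd0[where x=x and q=p, OF p(1,2)] .
      moreover have "S x' = S (x(p:=0)) + 1" unfolding x'_def using Supd1[where x="x(p:=0)" and q=q, OF q(1)] q(2) pnq by simp
      ultimately have Sx': "S x' = s" using Sx by simp
      have out': "\<forall>k. k \<notin> {1..n} \<longrightarrow> x' k = x0 k" using out p(1) q(1) unfolding x'_def by auto
      have "{k\<in>{1..n}. x' k = 1 \<and> z k = 0} = {k\<in>{1..n}. x k = 1 \<and> z k = 0} - {p}"
        unfolding x'_def using p q pnq by auto
      then have "card {k\<in>{1..n}. x' k = 1 \<and> z k = 0} = m" using c p by simp
      then show "P z" using Suc.IH Px' Sx' out' by blast
    qed
  qed
  have Pz: "P z" using reach[of "card {k\<in>{1..n}. x0 k = 1 \<and> z k = 0}"] P0 s_def by blast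
  have "F z = z i" unfolding F_def using run_sorted[OF wfN zs] by simp
  moreover have "z i = 0" using Pz Sz bnd unfolding P_def z_def by auto
  ultimately show False using Pz unfolding P_def by simp
qed

end
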